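(* Let $q>0$, let $S\subset\mathbb{H}^3$ be a sphere of hyperbolic radius $q$ centred at $p\in\mathbb{H}^3$, let $n\geq2$ and let $u_1,\dots,u_n\in T_p\mathbb{H}^3$ be unit vectors. Let $p_i$ be the intersection point of $S$ with $\mathrm{geod}(p,u_i)(\mathbb R_+)$. For each $i$ let $S_i\subset\mathbb{H}^3$ be the sphere of hyperbolic radius $q$ such that $S\cap S_i=\{p_i\}$, and let $\theta_{ij}$ be the angle between $u_i$ and $u_j$. If for all $i\neq j$ $$\theta_{ij}>2\arcsin\left(\frac{1}{2\cosh q}\right),$$ then $S_i\cap S_j=\emptyset$ for all $i\neq j$.
   Context: For $p\in\mathbb{H}^3$ and a unit vector $v\in T_p\mathbb{H}^3$, $\mathrm{geod}(p,v)$ denotes the unit-speed geodesic through $p$ with initial velocity $v$. *)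

theory Defs
  imports "HOL-Analysis.Analysis"
begin

text \<open>Hyperboloid model of hyperbolic 3-space inside Minkowski space R x R^3.\<close>

type_synonym mpoint = "real \<times> (real^3)"

definition mink :: "mpoint \<Rightarrow> mpoint \<Rightarrow> real" where
  "mink x y = - fst x * fst y + snd x \<bullet> snd y"

definition H3 :: "mpoint set" where
  "H3 = {x. mink x x = -1 \<and> fst x > 0}"

definition hdist :: "mpoint \<Rightarrow> mpoint \<Rightarrow> real" where
  "hdist x y = arcosh (- mink x y)"

definition tangent :: "mpoint \<Rightarrow> mpoint set" where
  "tangent p = {v. mink p v = 0}"

definition unit_tangent :: "mpoint \<Rightarrow> mpoint \<Rightarrow> bool" where
  "unit_tangent p v \<longleftrightarrow> v \<in> tangent p \<and> mink v v = 1"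

definition geod :: "mpoint \<Rightarrow> mpoint \<Rightarrow> real \<Rightarrow> mpoint" where
  "geod p v t = cosh t *\<^sub>R p + sinh t *\<^sub>R v"

text \<open>Angle between two unit tangent vectors (Riemannian metric = Minkowski form on T_p).\<close>
definition tangent_angle :: "mpoint \<Rightarrow> mpoint \<Rightarrow> real" where
  "tangent_angle u v = arccos (mink u v)"

definition hsphere :: "mpoint \<Rightarrow> real \<Rightarrow> mpoint set" where
  "hsphere c r = {x \<in> H3. hdist c x = r}"

end

theory Submission
  imports Defs
begin


lemma mink_sym: "mink x y = mink y x"
  by (simp add: mink_def inner_commute mult.commute)
lemma mink_add_left[simp]: "mink (x + y) z = mink x z + mink y z"
  by (simp add: mink_def inner_add_left algebra_simps)
lemma mink_add_right[simp]: "mink z (x + y) = mink z x + mink z y"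
  by (simp add: mink_def inner_add_right algebra_simps)
lemma mink_diff_left[simp]: "mink (x - y) z = mink x z - mink y z"
  by (simp add: mink_def inner_diff_left algebra_simps)
lemma mink_diff_right[simp]: "mink z (x - y) = mink z x - mink z y"
  by (simp add: mink_def inner_diff_right algebra_simps)
lemma mink_scale_left[simp]: "mink (a *\<^sub>R x) z = a * mink x z"
  by (simp add: mink_def algebra_simps)
lemma mink_scale_right[simp]: "mink z (a *\<^sub>R x) = a * mink z x"
  by (simp add: mink_def algebra_simps)
lemma mink_minus_left[simp]: "mink (- x) z = - mink x z"
  by (simp add: mink_def algebra_simps)
lemma mink_minus_right[simp]: "mink z (- x) = - mink z x"
  by (simp add: mink_def algebra_simps)

lemma tangent_spacelike:
  assumes "mink x x = -1" "mink x y = 0" shows "mink y y \<ge> 0"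
proof -
  obtain x0 X where x: "x = (x0, X)" by (cases x)
  obtain y0 Y where y: "y = (y0, Y)" by (cases y)
  have 1: "x0^2 = 1 + X \<bullet> X" using assms(1) by (simp add: x mink_def power2_eq_square)
  have 2: "x0 * y0 = X \<bullet> Y" using assms(2) by (simp add: x y mink_def)
  have cs: "(X \<bullet> Y)^2 \<le> (X \<bullet> X) * (Y \<bullet> Y)" by (rule Cauchy_Schwarz_ineq)
  have e: "x0^2 * y0^2 = (X \<bullet> Y)^2" using 2 by (metis power_mult_distrib)
  have "x0^2 * y0^2 \<le> (x0^2 - 1) * (Y \<bullet> Y)" using cs 1 e by simp
  also have "\<dots> \<le> x0^2 * (Y \<bullet> Y)" by (simp add: algebra_simps)
  finally have "x0^2 * y0^2 \<le> x0^2 * (Y \<bullet> Y)" .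
  moreover have "x0^2 > 0" using 1 inner_ge_zero[of X] by linarith
  ultimately have "y0^2 \<le> Y \<bullet> Y" by simp
  thus ?thesis by (simp add: y mink_def power2_eq_square)
qed

lemma rev_cs:
  assumes "mink x x = -1" shows "(mink x w)^2 \<ge> - mink w w"
proof -
  let ?a = "mink x w"
  have "mink x (w + ?a *\<^sub>R x) = 0" using assms by simp
  hence "mink (w + ?a *\<^sub>R x) (w + ?a *\<^sub>R x) \<ge> 0" by (rule tangent_spacelike[OF assms])
  thus ?thesis using assms by (simp add: mink_sym[of x w] power2_eq_square algebra_simps)
qed

lemma H3_strict:
  assumes "mink x x = -1" "y \<in> H3" shows "\<bar>snd x \<bullet> snd y\<bar> < \<bar>fst x\<bar> * fst y"
proof -
  obtain x0 X where x: "x = (x0, X)" by (cases x)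
  obtain y0 Y where y: "y = (y0, Y)" by (cases y)
  have 1: "x0^2 = 1 + X \<bullet> X" using assms(1) by (simp add: x mink_def power2_eq_square)
  have 2: "y0^2 = 1 + Y \<bullet> Y" "y0 > 0" using assms(2) by (auto simp add: y H3_def mink_def power2_eq_square)
  have cs: "(X \<bullet> Y)^2 \<le> (X \<bullet> X) * (Y \<bullet> Y)" by (rule Cauchy_Schwarz_ineq)
  have a: "(x0^2-1)*(y0^2-1) = x0^2*y0^2 - x0^2 - y0^2 + 1" by (simp add: algebra_simps)
  have b: "x0^2 \<ge> 1" "y0^2 \<ge> 1" using 1 2 inner_ge_zero[of X] inner_ge_zero[of Y] by linarith+
  have c: "(X \<bullet> Y)^2 \<le> (x0^2-1)*(y0^2-1)" using cs 1 2 by simp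
  have "(X \<bullet> Y)^2 < x0^2 * y0^2"
    using c a b by linarith
  hence "\<bar>X \<bullet> Y\<bar>^2 < (\<bar>x0\<bar> * y0)^2" by (simp add: power_mult_distrib)
  hence "\<bar>X \<bullet> Y\<bar> < \<bar>x0\<bar> * y0" by (rule power_less_imp_less_base) (use 2 in simp)
  thus ?thesis by (simp add: x y)
qed

lemma H3_mink_le:
  assumes "x \<in> H3" "y \<in> H3" shows "mink x y \<le> -1"
proof -
  have xx: "mink x x = -1" "fst x > 0" using assms(1) by (auto simp: H3_def)
  have "mink x y < 0" using H3_strict[OF xx(1) assms(2)] xx(2) assms(2)
    by (auto simp: mink_def H3_def abs_if split: if_splits)
  moreover have "(mink x y)^2 \<ge> 1" using rev_cs[OF xx(1), of y] assms(2) by (simp add: H3_def)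
  ultimately show ?thesis using abs_square_less_1[of "mink x y"] by linarith
qed

lemma H3_same_sheet:
  assumes "mink x x = -1" "y \<in> H3" "mink x y < 0" shows "x \<in> H3"
proof -
  have "fst x > 0"
  proof (rule ccontr)
    assume "\<not> fst x > 0"
    hence "-fst x * fst y \<ge> \<bar>snd x \<bullet> snd y\<bar>" using H3_strict[OF assms(1,2)] by simp
    thus False using assms(3) by (simp add: mink_def)
  qed
  thus ?thesis using assms(1) by (simp add: H3_def)
qed

lemma hdist_iff:
  assumes "x \<in> H3" "y \<in> H3" "r \<ge> 0" shows "hdist x y = r \<longleftrightarrow> mink x y = - cosh r"
proof
  assume "hdist x y = r"
  thus "mink x y = - cosh r" using H3_mink_le[OF assms(1,2)] cosh_arcosh_real[of "- mink x y"]
    by (auto simp: hdist_def)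
next
  assume "mink x y = - cosh r"
  thus "hdist x y = r" using arcosh_cosh_real[OF assms(3)] by (simp add: hdist_def)
qed


lemma center:
  assumes q: "q > 0" and p: "p \<in> H3" and ut: "unit_tangent p u"
    and pt: "pt \<in> hsphere p q" and t: "t \<ge> 0" "pt = geod p u t"
    and c: "c \<in> H3" and int: "hsphere p q \<inter> hsphere c q = {pt}"
  shows "c = (cosh q ^ 2 + sinh q ^ 2) *\<^sub>R p + (2 * cosh q * sinh q) *\<^sub>R u"
proof -
  define k where "k = cosh q"
  define s where "s = sinh q"
  have ks: "k^2 = s^2 + 1" by (simp add: k_def s_def cosh_square_eq)
  have spos: "s > 0" using q by (simp add: s_def)
  have kpos: "k > 0" by (simp add: k_def)
  have pp: "mink p p = -1" using p by (simp add: H3_def)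
  have pu: "mink p u = 0" "mink u p = 0" using ut by (auto simp: unit_tangent_def tangent_def mink_sym)
  have uu: "mink u u = 1" using ut by (simp add: unit_tangent_def)
  have ptH: "pt \<in> H3" and hp: "hdist p pt = q" using pt by (auto simp: hsphere_def)
  have "mink p pt = - k" using hdist_iff[OF p ptH, of q] hp q by (simp add: k_def)
  moreover have "mink p pt = - cosh t" using t pp pu by (simp add: geod_def)
  ultimately have "cosh t = cosh q" by (simp add: k_def)
  hence "t = q" using arcosh_cosh_real[OF t(1)] arcosh_cosh_real[of q] q t(1) by simp
  hence ptq: "pt = k *\<^sub>R p + s *\<^sub>R u" using t by (simp add: geod_def k_def s_def)
  define D where "D = - mink p c"
  define a where "a = mink u c"
  have cc: "mink c c = -1" using c by (simp add: H3_def)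
  have ptc: "pt \<in> hsphere c q" using int by auto
  have "mink c pt = - k" using hdist_iff[OF c ptH, of q] ptc q by (simp add: k_def hsphere_def)
  hence sa: "s * a = k * (D - 1)" using ptq by (simp add: D_def a_def mink_sym[of c] algebra_simps)
  have memb: "v = u" if v1: "mink p v = 0" and v2: "mink v v = 1" and v3: "mink v c = a" for v
  proof -
    define x where "x = k *\<^sub>R p + s *\<^sub>R v"
    have v1': "mink v p = 0" using v1 by (simp add: mink_sym)
    have xx: "mink x x = -1" using pp v1 v1' v2 ks by (simp add: x_def power2_eq_square algebra_simps)
    have xp: "mink x p = - k" using pp v1' by (simp add: x_def)
    hence xH: "x \<in> H3" using H3_same_sheet[OF xx p] kpos by simp
    have "mink p x = - k" using xp by (simp add: mink_sym)
    hence h1: "x \<in> hsphere p q" using hdist_iff[OF p xH, of q] q xH by (simp add: hsphere_def k_def)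
    have "mink c x = -k" using sa v3 by (simp add: x_def D_def mink_sym[of c] algebra_simps)
    hence h2: "x \<in> hsphere c q" using hdist_iff[OF c xH, of q] q xH by (simp add: hsphere_def k_def)
    have "x = pt" using h1 h2 int by auto
    hence "s *\<^sub>R v = s *\<^sub>R u" using ptq by (simp add: x_def)
    thus "v = u" using spos by simp
  qed
  have a0: "a \<noteq> 0"
  proof
    assume "a = 0"
    hence "- u = u" using pu uu by (intro memb) (auto simp: a_def)
    hence "2 *\<^sub>R u = 0" by (metis scaleR_2 add_eq_0_iff2 minus_equation_iff add.inverse_inverse eq_neg_iff_add_eq_0)
    hence "u = 0" by simp
    thus False using uu by (simp add: mink_def)
  qed
  hence "D \<noteq> 1" using sa spos kpos by auto
  moreover have "D \<ge> 1" using H3_mink_le[OF p c] by (simp add: D_def)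
  ultimately have D1: "D > 1" by simp
  define W2 where "W2 = D^2 - 1"
  have W2pos: "W2 > 0" using D1 by (simp add: W2_def)
  define w where "w = c - D *\<^sub>R p"
  have pw: "mink p w = 0" using pp by (simp add: w_def D_def)
  have wc: "mink w c = W2" using cc by (simp add: w_def W2_def D_def power2_eq_square)
  have "mink w p = 0" using pw by (simp add: mink_sym)
  hence ww: "mink w w = W2" using wc by (simp add: w_def W2_def)
  have wu: "mink w u = a" using pu by (simp add: w_def a_def mink_sym[of c u])
  define v where "v = (2 * a / W2) *\<^sub>R w - u"
  have "mink p v = 0" using pw pu by (simp add: v_def)
  moreover have "mink v v = 1"
    using ww wu uu W2pos by (simp add: v_def mink_sym[of u w] field_simps power2_eq_square)
  moreover have "mink v c = a" using wc W2pos by (simp add: v_def a_def)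
  ultimately have "v = u" by (rule memb)
  hence "(2 * a / W2) *\<^sub>R w = 2 *\<^sub>R u" by (simp add: v_def algebra_simps scaleR_2)
  hence "(W2 / (2*a)) *\<^sub>R ((2 * a / W2) *\<^sub>R w) = (W2 / (2*a)) *\<^sub>R (2 *\<^sub>R u)" by simp
  hence wu': "w = (W2 / a) *\<^sub>R u" using a0 W2pos by simp
  have "W2 = (W2/a)^2" using ww uu by (simp add: wu' power2_eq_square)
  hence aW: "a^2 = W2" using a0 W2pos by (simp add: field_simps power2_eq_square)
  have "s^2 * a^2 = k^2 * (D-1)^2" using sa by (metis power_mult_distrib)
  moreover have a2: "a^2 = (D-1)*(D+1)" using aW by (simp add: W2_def power2_eq_square algebra_simps)
  ultimately have "s^2 * ((D-1)*(D+1)) = k^2 * (D-1)^2" by simp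
  hence "(D-1) * (s^2 * (D+1)) = (D-1) * (k^2 * (D-1))" by (simp add: power2_eq_square algebra_simps)
  hence "s^2 * (D+1) = k^2 * (D-1)" using D1 by simp
  hence Dv: "D = k^2 + s^2" using ks by (simp add: algebra_simps)
  hence "s * a = s * (2 * k * s)" using sa ks by (simp add: algebra_simps power2_eq_square)
  hence av: "a = 2 * k * s" using spos by simp
  have "c = D *\<^sub>R p + w" by (simp add: w_def)
  also have "\<dots> = D *\<^sub>R p + a *\<^sub>R u"
  proof -
    have "W2 / a = a" using aW a0 by (simp add: power2_eq_square field_simps)
    thus ?thesis using wu' by simp
  qed
  finally show ?thesis using Dv av by (simp add: k_def s_def)
qed


lemma angle_bound:
  assumes k: "k > 1" and m: "m \<le> 1" and th: "arccos m > 2 * arcsin (1 / (2 * k))"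
  shows "m < 1 - 1 / (2 * k^2)"
proof (cases "m < -1")
  case True
  have "k * k > 1 * 1" using k by (intro mult_strict_mono) auto
  hence "1 / (2 * k^2) < 1" by (simp add: power2_eq_square)
  then show ?thesis using True by linarith
next
  case False
  define y where "y = 1 / (2 * k)"
  have y: "0 < y" "y < 1/2" using k by (auto simp: y_def field_simps)
  define al where "al = arcsin y"
  have al: "0 < al" "al < pi/2" using arcsin_lt_bounded[of y] y arcsin_less_arcsin[of 0 y]
    by (auto simp: al_def)
  have "sin al = y" using y by (simp add: al_def)
  hence "cos (2 * al) = 1 - 2 * y^2" by (simp add: cos_double_sin)
  moreover have "2 * y^2 = 1 / (2 * k^2)" using k by (simp add: y_def power2_eq_square field_simps)
  ultimately have c2: "cos (2 * al) = 1 - 1 / (2 * k^2)" by simp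
  have b: "0 \<le> arccos m" "arccos m \<le> pi" using arccos_bounded[of m] False m by auto
  have "cos (arccos m) < cos (2 * al)"
    by (rule cos_monotone_0_pi) (use al th b in \<open>auto simp: al_def y_def\<close>)
  thus ?thesis using False m c2 by simp
qed

theorem lemma9:
  fixes q :: real and p :: mpoint and n :: nat
    and u :: "nat \<Rightarrow> mpoint" and pt :: "nat \<Rightarrow> mpoint" and c :: "nat \<Rightarrow> mpoint"
  assumes "q > 0" and "p \<in> H3" and "n \<ge> 2"
    and "\<And>i. i \<in> {1..n} \<Longrightarrow> unit_tangent p (u i)"
    and "\<And>i. i \<in> {1..n} \<Longrightarrow> pt i \<in> hsphere p q \<and> (\<exists>t\<ge>0. pt i = geod p (u i) t)"
    and "\<And>i. i \<in> {1..n} \<Longrightarrow> c i \<in> H3 \<and> hsphere p q \<inter> hsphere (c i) q = {pt i}"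
    and "\<And>i j. i \<in> {1..n} \<Longrightarrow> j \<in> {1..n} \<Longrightarrow> i \<noteq> j \<Longrightarrow>
           tangent_angle (u i) (u j) > 2 * arcsin (1 / (2 * cosh q))"
  shows "\<forall>i\<in>{1..n}. \<forall>j\<in>{1..n}. i \<noteq> j \<longrightarrow> hsphere (c i) q \<inter> hsphere (c j) q = {}"
proof (intro ballI impI)
  fix i j assume i: "i \<in> {1..n}" and j: "j \<in> {1..n}" and ij: "i \<noteq> j"
  define k where "k = cosh q"
  define s where "s = sinh q"
  define K where "K = k^2 + s^2"
  define S where "S = 2 * k * s"
  have ks: "k^2 = s^2 + 1" by (simp add: k_def s_def cosh_square_eq)
  have spos: "s > 0" using assms(1) by (simp add: s_def)
  have kpos: "k > 0" by (simp add: k_def)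
  have k1: "k > 1"
  proof -
    have "k^2 > 1" using ks spos by simp
    show ?thesis
    proof (rule ccontr)
      assume "\<not> k > 1"
      hence "k^2 \<le> 1" using kpos by (intro power_le_one) auto
      thus False using \<open>k^2 > 1\<close> by simp
    qed
  qed
  have pp: "mink p p = -1" using assms(2) by (simp add: H3_def)
  have cform: "c l = K *\<^sub>R p + S *\<^sub>R u l" if l: "l \<in> {1..n}" for l
  proof -
    obtain t where t: "t \<ge> 0" "pt l = geod p (u l) t" using assms(5)[OF l] by blast
    show ?thesis
      using center[OF assms(1) assms(2) assms(4)[OF l] _ t, of "c l"] assms(5)[OF l] assms(6)[OF l]
      by (simp add: K_def S_def k_def s_def)
  qed
  have ti: "mink p (u i) = 0" "mink (u i) (u i) = 1" using assms(4)[OF i]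
    by (auto simp: unit_tangent_def tangent_def)
  have tj: "mink p (u j) = 0" "mink (u j) (u j) = 1" using assms(4)[OF j]
    by (auto simp: unit_tangent_def tangent_def)
  have ti': "mink (u i) p = 0" and tj': "mink (u j) p = 0" using ti tj by (simp_all add: mink_sym)
  define m where "m = mink (u i) (u j)"
  have mji: "mink (u j) (u i) = m" by (simp add: m_def mink_sym)
  have "mink p (u i - u j) = 0" using ti tj by simp
  hence "mink (u i - u j) (u i - u j) \<ge> 0" by (rule tangent_spacelike[OF pp])
  hence m1: "m \<le> 1" using ti tj mji by (simp add: m_def)
  have mb: "m < 1 - 1 / (2 * k^2)"
    using angle_bound[OF k1 m1] assms(7)[OF i j ij] by (simp add: m_def tangent_angle_def k_def)
  define C where "C = - mink (c i) (c j)"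
  have Cv: "C = K^2 - S^2 * m"
    using pp ti ti' tj tj' by (simp add: C_def cform[OF i] cform[OF j] m_def power2_eq_square algebra_simps)
  have Kv: "K = 2 * k^2 - 1" using ks by (simp add: K_def)
  have S2: "S^2 = 4 * k^2 * (k^2 - 1)" using ks by (simp add: S_def power_mult_distrib)
  have "S^2 * m < S^2 * (1 - 1 / (2 * k^2))"
  proof (rule mult_strict_left_mono[OF mb])
    have "S > 0" using kpos spos by (simp add: S_def)
    thus "S^2 > 0" by simp
  qed
  also have "\<dots> = 4 * k^2 * (k^2 - 1) * (1 - 1 / (2 * k^2))" by (simp only: S2)
  also have "\<dots> = 4 * k^2 * (k^2 - 1) - 2 * (k^2 - 1)" using k1 by (simp add: field_simps)
  also have "\<dots> = K^2 - K" unfolding Kv by (simp add: power2_eq_square algebra_simps)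
  finally have Cgt: "C > 2 * k^2 - 1" using Cv Kv by simp
  show "hsphere (c i) q \<inter> hsphere (c j) q = {}"
  proof (rule ccontr)
    assume "hsphere (c i) q \<inter> hsphere (c j) q \<noteq> {}"
    then obtain x where xi: "x \<in> hsphere (c i) q" and xj: "x \<in> hsphere (c j) q" by blast
    have xH: "x \<in> H3" using xi by (simp add: hsphere_def)
    have ci: "c i \<in> H3" and cj: "c j \<in> H3" using assms(6)[OF i] assms(6)[OF j] by auto
    have a: "mink (c i) x = - k" using xi hdist_iff[OF ci xH, of q] assms(1) by (simp add: hsphere_def k_def)
    have b: "mink (c j) x = - k" using xj hdist_iff[OF cj xH, of q] assms(1) by (simp add: hsphere_def k_def)
    have xx: "mink x x = -1" using xH by (simp add: H3_def)
    have cii: "mink (c i) (c i) = -1" and cjj: "mink (c j) (c j) = -1" using ci cj by (simp_all add: H3_def)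
    have "(mink x (c i + c j))^2 \<ge> - mink (c i + c j) (c i + c j)" by (rule rev_cs[OF xx])
    moreover have "mink x (c i + c j) = -2 * k" using a b by (simp add: mink_sym[of x])
    moreover have "mink (c i + c j) (c i + c j) = -2 - 2 * C"
      using cii cjj by (simp add: C_def mink_sym[of "c j" "c i"])
    ultimately have "4 * k^2 \<ge> 2 + 2 * C" by (simp add: power2_eq_square)
    thus False using Cgt by linarith
  qed
qed

end
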